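(* Consider the sequential occupancy game described in the context. For every $t\in\{0,\dots,\ell-1\}$ and every sequential occupancy state $x_{1,t}$ at sub-stage $(1,t)$, \[ v^*_{\mathrm{seq}}(x_{1,t})=\max_{d_{1,t}\in\mathcal D_{1,t}}\Big[\rho_{\mathrm{seq}}(x_{1,t},d_{1,t})+\gamma_1\, v^*_{\mathrm{seq}}\big(\tau_{\mathrm{seq}}(x_{1,t},d_{1,t})\big)\Big], \] and for every sequential occupancy state $x_{2,t}$ at sub-stage $(2,t)$, \[ v^*_{\mathrm{seq}}(x_{2,t})=\min_{d_{2,t}\in\mathcal D_{2,t}}\Big[\rho_{\mathrm{seq}}(x_{2,t},d_{2,t})+\gamma_2\, v^*_{\mathrm{seq}}\big(\tau_{\mathrm{seq}}(x_{2,t},d_{2,t})\big)\Big], \] where $\gamma_1=1$ and $\gamma_2=\gamma$, and the maximum and minimum are attained.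
   Context: A finite-horizon two-player zero-sum partially observable stochastic game consists of finite sets $\mathcal S$ (hidden states), $\mathcal A_1,\mathcal A_2$ (actions), $\mathcal Z_1,\mathcal Z_2$ (private observations), a kernel $p(s',z_1,z_2\mid s,a_1,a_2)$ giving the joint probability of next state and observations, a reward $r(s,a_1,a_2)\in\mathbb R$ received by player 1 (maximiser) and paid by player 2 (minimiser), an initial distribution $b\in\Delta(\mathcal S)$, a discount $\gamma\in[0,1)$ and a horizon $\ell\in\mathbb N$. Player $i$'s private history at stage $t$ is $h_{i,t}=(a_{i,0},z_{i,1},\dots,a_{i,t-1},z_{i,t})$ (empty at $t=0$), ranging over the finite set $\mathcal H_{i,t}$; appending an action and observation is written $h_{i,t}\cdot a_i\cdot z_i$. A decision rule is a map $d_{i,t}:\mathcal H_{i,t}\to\Delta(\mathcal A_i)$; $\mathcal D_{i,t}$ is the set of them. Each stage $t<\ell$ is split into sub-stages $(1,t)$ then $(2,t)$; $(1,\ell)$ is terminal. A sequential occupancy state at $(1,t)$ is $x_{1,t}\in\Delta(\mathcal S\times\mathcal H_{1,t}\times\mathcal H_{2,t})$ and at $(2,t)$ is $x_{2,t}\in\Delta(\mathcal S\times\mathcal H_{1,t}\times\mathcal H_{2,t}\times\mathcal A_1)$. Transitions and rewards: $\tau_{\mathrm{seq}}(x_{1,t},d_{1,t})(s,h_1,h_2,a_1)=x_{1,t}(s,h_1,h_2)\,d_{1,t}(a_1\mid h_1)$, $\rho_{\mathrm{seq}}(x_{1,t},d_{1,t})=0$; $\tau_{\mathrm{seq}}(x_{2,t},d_{2,t})(s',h_1\cdot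 a_1\cdot z_1,h_2\cdot a_2\cdot z_2)=\sum_s x_{2,t}(s,h_1,h_2,a_1)\,d_{2,t}(a_2\mid h_2)\,p(s',z_1,z_2\mid s,a_1,a_2)$ (an occupancy at $(1,t+1)$), and $\rho_{\mathrm{seq}}(x_{2,t},d_{2,t})=\sum_{s,h_1,h_2,a_1,a_2}x_{2,t}(s,h_1,h_2,a_1)\,d_{2,t}(a_2\mid h_2)\,r(s,a_1,a_2)$. The sequential occupancy game from an occupancy $x$ at sub-stage $(i,t)$: at each subsequent sub-stage $(1,k)$ player 1 chooses $d_{1,k}\in\mathcal D_{1,k}$, at each $(2,k)$ player 2 chooses $d_{2,k}\in\mathcal D_{2,k}$, the occupancy evolves deterministically by $\tau_{\mathrm{seq}}$, and the total payoff is $\sum_{k}\gamma^{k-t}\rho_{\mathrm{seq}}(x_{2,k},d_{2,k})$ over the sub-stages $(2,k)$, $k\ge t$, visited before $(1,\ell)$. A strategy of a player maps each sequence of previously chosen decision rules (equivalently the path of occupancies) ending at one of its own sub-stages to a decision rule of that sub-stage. $v^*_{\mathrm{seq}}(x)$ is the supremum over player-1 strategies of the infimum over player-2 strategies of the total payoff from $x$; in particular $v^*_{\mathrm{seq}}(x_{1,\ell})=0$. *)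

theory Defs
  imports "HOL-Probability.Probability_Mass_Function"
begin

text \<open>Private histories of length t: lists of (action, observation) pairs.
  h \<cdot> a \<cdot> z is written  h @ [(a, z)].\<close>
definition hist :: "nat \<Rightarrow> ('a \<times> 'z) list set" where
  "hist t = {h. length h = t}"

definition occ1 :: "nat \<Rightarrow> ('s \<times> ('a1 \<times> 'z1) list \<times> ('a2 \<times> 'z2) list \<Rightarrow> real) \<Rightarrow> bool" where
  "occ1 t x \<longleftrightarrow> (\<forall>w. 0 \<le> x w)
     \<and> (\<forall>s h1 h2. x (s, h1, h2) \<noteq> 0 \<longrightarrow> length h1 = t \<and> length h2 = t)
     \<and> (\<Sum>w\<in>UNIV \<times> hist t \<times> hist t. x w) = 1"

definition occ2 :: "nat \<Rightarrow> ('s \<times> ('a1 \<times> 'z1) list \<times> ('a2 \<times> 'z2) list \<times> 'a1 \<Rightarrow> real) \<Rightarrow> bool" where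
  "occ2 t y \<longleftrightarrow> (\<forall>w. 0 \<le> y w)
     \<and> (\<forall>s h1 h2 a1. y (s, h1, h2, a1) \<noteq> 0 \<longrightarrow> length h1 = t \<and> length h2 = t)
     \<and> (\<Sum>w\<in>UNIV \<times> hist t \<times> hist t \<times> UNIV. y w) = 1"

definition tau1 ::
  "('s \<times> ('a1 \<times> 'z1) list \<times> ('a2 \<times> 'z2) list \<Rightarrow> real) \<Rightarrow> (('a1 \<times> 'z1) list \<Rightarrow> 'a1 pmf)
    \<Rightarrow> ('s \<times> ('a1 \<times> 'z1) list \<times> ('a2 \<times> 'z2) list \<times> 'a1 \<Rightarrow> real)" where
  "tau1 x d = (\<lambda>(s, h1, h2, a1). x (s, h1, h2) * pmf (d h1) a1)"

definition rho1 ::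
  "('s \<times> ('a1 \<times> 'z1) list \<times> ('a2 \<times> 'z2) list \<Rightarrow> real) \<Rightarrow> (('a1 \<times> 'z1) list \<Rightarrow> 'a1 pmf) \<Rightarrow> real" where
  "rho1 x d = 0"

text \<open>Transition and reward at sub-stage (2,t); p s a1 a2 is the joint
  distribution of (next state, observation 1, observation 2).\<close>
definition tau2 ::
  "('s \<Rightarrow> 'a1 \<Rightarrow> 'a2 \<Rightarrow> ('s \<times> 'z1 \<times> 'z2) pmf)
    \<Rightarrow> ('s \<times> ('a1 \<times> 'z1) list \<times> ('a2 \<times> 'z2) list \<times> 'a1 \<Rightarrow> real) \<Rightarrow> (('a2 \<times> 'z2) list \<Rightarrow> 'a2 pmf)
    \<Rightarrow> ('s \<times> ('a1 \<times> 'z1) list \<times> ('a2 \<times> 'z2) list \<Rightarrow> real)" where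
  "tau2 p y d = (\<lambda>(s', h1', h2').
     if h1' \<noteq> [] \<and> h2' \<noteq> [] then
       (case last h1' of (a1, z1) \<Rightarrow> case last h2' of (a2, z2) \<Rightarrow>
          \<Sum>s\<in>UNIV. y (s, butlast h1', butlast h2', a1) * pmf (d (butlast h2')) a2
                      * pmf (p s a1 a2) (s', z1, z2))
     else 0)"

definition rho2 ::
  "nat \<Rightarrow> ('s \<Rightarrow> 'a1 \<Rightarrow> 'a2 \<Rightarrow> real)
    \<Rightarrow> ('s \<times> ('a1 \<times> 'z1) list \<times> ('a2 \<times> 'z2) list \<times> 'a1 \<Rightarrow> real) \<Rightarrow> (('a2 \<times> 'z2) list \<Rightarrow> 'a2 pmf) \<Rightarrow> real" where
  "rho2 t r y d = (\<Sum>(s, h1, h2, a1)\<in>UNIV \<times> hist t \<times> hist t \<times> UNIV.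
       \<Sum>a2\<in>UNIV. y (s, h1, h2, a1) * pmf (d h2) a2 * r s a1 a2)"

text \<open>A strategy maps the sequence of
  previously chosen decision rules (Inl = player 1's, Inr = player 2's) to a
  decision rule. play n ... t x hs: total discounted payoff from sub-stage (1,t),
  occupancy x, when n full stages remain, given the earlier decision-rule sequence hs.\<close>
fun play ::
  "nat \<Rightarrow> ('s \<Rightarrow> 'a1 \<Rightarrow> 'a2 \<Rightarrow> ('s \<times> 'z1 \<times> 'z2) pmf) \<Rightarrow> ('s \<Rightarrow> 'a1 \<Rightarrow> 'a2 \<Rightarrow> real) \<Rightarrow> real
    \<Rightarrow> (((('a1 \<times> 'z1) list \<Rightarrow> 'a1 pmf) + (('a2 \<times> 'z2) list \<Rightarrow> 'a2 pmf)) list \<Rightarrow> (('a1 \<times> 'z1) list \<Rightarrow> 'a1 pmf))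
    \<Rightarrow> (((('a1 \<times> 'z1) list \<Rightarrow> 'a1 pmf) + (('a2 \<times> 'z2) list \<Rightarrow> 'a2 pmf)) list \<Rightarrow> (('a2 \<times> 'z2) list \<Rightarrow> 'a2 pmf))
    \<Rightarrow> nat \<Rightarrow> ('s \<times> ('a1 \<times> 'z1) list \<times> ('a2 \<times> 'z2) list \<Rightarrow> real)
    \<Rightarrow> ((('a1 \<times> 'z1) list \<Rightarrow> 'a1 pmf) + (('a2 \<times> 'z2) list \<Rightarrow> 'a2 pmf)) list \<Rightarrow> real" where
  "play 0 p r g \<sigma>1 \<sigma>2 t x hs = 0"
| "play (Suc n) p r g \<sigma>1 \<sigma>2 t x hs =
     (let d1 = \<sigma>1 hs; y = tau1 x d1; hs' = hs @ [Inl d1]; d2 = \<sigma>2 hs'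
      in rho1 x d1 + (rho2 t r y d2 + g * play n p r g \<sigma>1 \<sigma>2 (Suc t) (tau2 p y d2) (hs' @ [Inr d2])))"

definition pay1 where
  "pay1 p r g L \<sigma>1 \<sigma>2 t x = play (L - t) p r g \<sigma>1 \<sigma>2 t x []"

definition pay2 where
  "pay2 p r g L \<sigma>1 \<sigma>2 t y =
     (if L \<le> t then 0 else
      (let d2 = \<sigma>2 [] in
       rho2 t r y d2 + g * play (L - Suc t) p r g \<sigma>1 \<sigma>2 (Suc t) (tau2 p y d2) [Inr d2]))"

definition vseq1 where
  "vseq1 p r g L t x = (SUP \<sigma>1. INF \<sigma>2. pay1 p r g L \<sigma>1 \<sigma>2 t x)"

definition vseq2 where
  "vseq2 p r g L t y = (SUP \<sigma>1. INF \<sigma>2. pay2 p r g L \<sigma>1 \<sigma>2 t y)"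

end

theory Submission
  imports Defs
begin


lemma compact_fun_PiE:
  fixes S :: "'a \<Rightarrow> ('b::topological_space) set"
  assumes "\<And>i. compact (S i)"
  shows "compact (PiE UNIV S)"
  using compactin_PiE [of "\<lambda>i. euclidean" UNIV S] euclidean_product_topology assms
  by (metis compactin_euclidean_iff)

definition Simp :: "('a::finite \<Rightarrow> real) set" where
  "Simp = {v. (\<forall>a. 0 \<le> v a) \<and> sum v UNIV = 1}"

lemma compact_Simp: "compact (Simp :: ('a::finite \<Rightarrow> real) set)"
proof -
  have "Simp \<subseteq> PiE UNIV (\<lambda>_::'a. {0..1::real})"
  proof
    fix v :: "'a \<Rightarrow> real" assume "v \<in> Simp"
    then have nn: "\<forall>a. 0 \<le> v a" and s1: "sum v UNIV = 1" unfolding Simp_def by auto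
    have "v a \<le> 1" for a
      using member_le_sum[of a UNIV v] nn s1 by auto
    with nn have "\<forall>a. 0 \<le> v a \<and> v a \<le> 1" by auto
    then show "v \<in> PiE UNIV (\<lambda>_::'a. {0..1::real})" by auto
  qed
  moreover have "compact (PiE UNIV (\<lambda>_::'a. {0..1::real}))"
    by (rule compact_fun_PiE) auto
  moreover have "closed (Simp :: ('a \<Rightarrow> real) set)"
  proof -
    have "Simp = (\<Inter>a. {v::'a\<Rightarrow>real. 0 \<le> v a}) \<inter> {v. sum v UNIV = 1}"
      unfolding Simp_def by auto
    moreover have "closed {v::'a\<Rightarrow>real. 0 \<le> v a}" for a
      by (intro closed_Collect_le continuous_on_const continuous_on_product_coordinates)
    moreover have "closed {v::'a\<Rightarrow>real. sum v UNIV = 1}"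
      by (intro closed_Collect_eq continuous_on_const continuous_on_sum continuous_on_product_coordinates)
    ultimately show ?thesis by (metis closed_Int closed_INT)
  qed
  ultimately show ?thesis
    by (metis compact_Int_closed inf.absorb_iff2)
qed

definition Dset :: "('h \<Rightarrow> 'a::finite \<Rightarrow> real) set" where
  "Dset = PiE UNIV (\<lambda>_. Simp)"

lemma compact_Dset: "compact Dset"
  unfolding Dset_def by (rule compact_fun_PiE) (rule compact_Simp)

definition emb :: "('h \<Rightarrow> 'a::finite \<Rightarrow> real) \<Rightarrow> ('h \<Rightarrow> 'a pmf)" where
  "emb q = (\<lambda>h. embed_pmf (q h))"

lemma pmf_emb: assumes "q \<in> Dset" shows "pmf (emb q h) a = q h a"
proof -
  have "q h \<in> Simp" using assms unfolding Dset_def by auto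
  then show ?thesis unfolding emb_def Simp_def
    by (subst pmf_embed_pmf) (auto simp: nn_integral_count_space_finite sum_ennreal)
qed

lemma pmf_in_Dset: "(\<lambda>h a. pmf (d h) a) \<in> Dset"
  unfolding Dset_def Simp_def by (auto simp: sum_pmf_eq_1)

lemma emb_pmf: "emb (\<lambda>h a. pmf (d h) a) = d"
  by (rule ext, rule pmf_eqI) (simp add: pmf_emb[OF pmf_in_Dset])

lemma Dset_ne: "Dset \<noteq> {}"
  using pmf_in_Dset by blast

lemma attain_max:
  fixes F :: "('h \<Rightarrow> 'a::finite pmf) \<Rightarrow> real"
  assumes "continuous_on Dset (\<lambda>q. F (emb q))"
  shows "\<exists>d. \<forall>d'. F d' \<le> F d"
proof -
  obtain q where q: "q \<in> Dset" "\<forall>q'\<in>Dset. F (emb q') \<le> F (emb q)"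
    using continuous_attains_sup[OF compact_Dset Dset_ne assms] by blast
  show ?thesis
  proof (intro exI allI)
    fix d' :: "'h \<Rightarrow> 'a pmf"
    show "F d' \<le> F (emb q)" using q(2) pmf_in_Dset[of d'] emb_pmf[of d'] by metis
  qed
qed

lemma attain_min:
  fixes F :: "('h \<Rightarrow> 'a::finite pmf) \<Rightarrow> real"
  assumes "continuous_on Dset (\<lambda>q. F (emb q))"
  shows "\<exists>d. \<forall>d'. F d \<le> F d'"
  using attain_max[of "\<lambda>d. - F d"] continuous_on_minus[OF assms] by force



lemma abs_INF_le:
  fixes f :: "'a \<Rightarrow> real"
  assumes "\<And>i. \<bar>f i\<bar> \<le> B" shows "\<bar>INF i. f i\<bar> \<le> B"
proof -
  have lb: "-B \<le> f i" for i using assms[of i] by (simp add: abs_le_iff)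
  have bb: "bdd_below (range f)" using lb unfolding bdd_below_def by blast
  have "-B \<le> (INF i. f i)" using lb by (intro cINF_greatest) auto
  moreover have "(INF i. f i) \<le> B"
    using cINF_lower[OF bb, of undefined] assms[of undefined] by auto
  ultimately show ?thesis by auto
qed

lemma abs_SUP_le:
  fixes f :: "'a \<Rightarrow> real"
  assumes "\<And>i. \<bar>f i\<bar> \<le> B" shows "\<bar>SUP i. f i\<bar> \<le> B"
proof -
  have bb: "bdd_above (range f)" using assms by (auto simp: bdd_above_def abs_le_iff intro!: exI[of _ "B"])
  have ub: "f i \<le> B" for i using assms[of i] by (simp add: abs_le_iff)
  have "(SUP i. f i) \<le> B" using ub by (intro cSUP_least) auto
  moreover have "-B \<le> (SUP i. f i)"
    using cSUP_upper[OF _ bb, of undefined] assms[of undefined] by auto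
  ultimately show ?thesis by auto
qed

lemma bdd_below_absI: fixes f :: "'a \<Rightarrow> real"
  assumes "\<And>i. \<bar>f i\<bar> \<le> B" shows "bdd_below (range f)"
proof -
  have lb: "-B \<le> f i" for i using assms[of i] by (simp add: abs_le_iff)
  then show ?thesis unfolding bdd_below_def by blast
qed

lemma bdd_above_absI: fixes f :: "'a \<Rightarrow> real"
  assumes "\<And>i. \<bar>f i\<bar> \<le> B" shows "bdd_above (range f)"
  using assms by (auto simp: bdd_above_def abs_le_iff intro!: exI[of _ "B"])

lemma supinf_mono_e:
  fixes f f' :: "'a \<Rightarrow> 'b \<Rightarrow> real"
  assumes "\<And>a b. \<bar>f a b\<bar> \<le> B" "\<And>a b. \<bar>f' a b\<bar> \<le> B" "\<And>a b. f a b \<le> f' a b + e"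
  shows "(SUP a. INF b. f a b) \<le> (SUP a. INF b. f' a b) + e"
proof -
  have "(INF b. f a b) \<le> (INF b. f' a b) + e" for a
  proof -
    have "(INF b. f a b) - e \<le> (INF b. f' a b)"
    proof (rule cINF_greatest)
      fix b show "(INF b. f a b) - e \<le> f' a b"
        using cINF_lower[OF bdd_below_absI[of "f a" B], of b] assms(1)[of a] assms(3)[of a b] by auto
    qed auto
    then show ?thesis by auto
  qed
  moreover have "bdd_above (range (\<lambda>a. INF b. f' a b))"
    by (rule bdd_above_absI[of _ B]) (rule abs_INF_le, rule assms(2))
  ultimately show ?thesis
  proof (intro cSUP_least)
    fix a
    assume h: "\<And>a. (INF b. f a b) \<le> (INF b. f' a b) + e" "bdd_above (range (\<lambda>a. INF b. f' a b))"
    have "(INF b. f' a b) \<le> (SUP a. INF b. f' a b)" by (rule cSUP_upper[OF _ h(2)]) auto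
    then show "(INF b. f a b) \<le> (SUP a. INF b. f' a b) + e" using h(1)[of a] by linarith
  qed auto
qed

lemma supinf_lip:
  fixes f f' :: "'a \<Rightarrow> 'b \<Rightarrow> real"
  assumes "\<And>a b. \<bar>f a b\<bar> \<le> B" "\<And>a b. \<bar>f' a b\<bar> \<le> B" "\<And>a b. \<bar>f a b - f' a b\<bar> \<le> e"
  shows "\<bar>(SUP a. INF b. f a b) - (SUP a. INF b. f' a b)\<bar> \<le> e"
proof -
  have e1: "f a b \<le> f' a b + e" and e2: "f' a b \<le> f a b + e" for a b
    using assms(3)[of a b] by (simp_all add: abs_le_iff)
  have "(SUP a. INF b. f a b) \<le> (SUP a. INF b. f' a b) + e"
    using assms e1 by (intro supinf_mono_e[of f B f'])
  moreover have "(SUP a. INF b. f' a b) \<le> (SUP a. INF b. f a b) + e"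
    using assms e2 by (intro supinf_mono_e[of f' B f])
  ultimately show ?thesis by auto
qed

lemma INF_surj: "surj h \<Longrightarrow> (INF x. f (h x)) = (INF y. f y)"
  by (metis image_image)
lemma SUP_surj: "surj h \<Longrightarrow> (SUP x. f (h x)) = (SUP y. f y)"
  by (metis image_image)

lemma INF_affine:
  fixes f :: "'a \<Rightarrow> real"
  assumes "\<And>i. \<bar>f i\<bar> \<le> B" "0 \<le> g"
  shows "(INF i. c + g * f i) = c + g * (INF i. f i)"
proof -
  have "mono (\<lambda>v. c + g * v)" using assms(2) by (auto simp: mono_def mult_left_mono)
  moreover have "continuous (at_right (Inf (range f))) (\<lambda>v. c + g * v)"
    by (intro continuous_intros)
  ultimately have "c + g * Inf (range f) = Inf ((\<lambda>v. c + g * v) ` range f)"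
    using continuous_at_Inf_mono[of "\<lambda>v. c + g * v" "range f"] bdd_below_absI[of f B] assms(1) by auto
  then show ?thesis by (simp add: image_image)
qed

lemma SUP_affine:
  fixes f :: "'a \<Rightarrow> real"
  assumes "\<And>i. \<bar>f i\<bar> \<le> B" "0 \<le> g"
  shows "(SUP i. c + g * f i) = c + g * (SUP i. f i)"
proof -
  have "mono (\<lambda>v. c + g * v)" using assms(2) by (auto simp: mono_def mult_left_mono)
  moreover have "continuous (at_left (Sup (range f))) (\<lambda>v. c + g * v)"
    by (intro continuous_intros)
  ultimately have "c + g * Sup (range f) = Sup ((\<lambda>v. c + g * v) ` range f)"
    using continuous_at_Sup_mono[of "\<lambda>v. c + g * v" "range f"] bdd_above_absI[of f B] assms(1) by auto
  then show ?thesis by (simp add: image_image)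
qed

lemma sup_inf_exchange:
  fixes W :: "'d \<Rightarrow> 't \<Rightarrow> real"
  assumes B: "\<And>d \<tau>. \<bar>W d \<tau>\<bar> \<le> B"
  shows "(SUP F. INF d. W d (F d)) = (INF d. SUP \<tau>. W d \<tau>)"
proof (rule antisym)
  have bS: "\<bar>SUP \<tau>. W d \<tau>\<bar> \<le> B" for d by (rule abs_SUP_le, rule B)
  show "(SUP F. INF d. W d (F d)) \<le> (INF d. SUP \<tau>. W d \<tau>)"
  proof (rule cSUP_least)
    fix F
    show "(INF d. W d (F d)) \<le> (INF d. SUP \<tau>. W d \<tau>)"
    proof (rule cINF_greatest)
      fix d
      have "(INF d. W d (F d)) \<le> W d (F d)"
        by (rule cINF_lower[OF bdd_below_absI[of _ B]]) (auto simp: B)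
      also have "\<dots> \<le> (SUP \<tau>. W d \<tau>)"
        by (rule cSUP_upper[OF _ bdd_above_absI[of _ B]]) (auto simp: B)
      finally show "(INF d. W d (F d)) \<le> (SUP \<tau>. W d \<tau>)" .
    qed auto
  qed auto
  show "(INF d. SUP \<tau>. W d \<tau>) \<le> (SUP F. INF d. W d (F d))"
  proof (rule field_le_epsilon)
    fix e :: real assume e: "0 < e"
    have "\<forall>d. \<exists>\<tau>. (SUP \<tau>. W d \<tau>) - e < W d \<tau>"
    proof
      fix d
      have "(SUP \<tau>. W d \<tau>) - e < (SUP \<tau>. W d \<tau>)" using e by auto
      then show "\<exists>\<tau>. (SUP \<tau>. W d \<tau>) - e < W d \<tau>"
        using less_cSUP_iff[OF _ bdd_above_absI[of "W d" B]] B by auto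
    qed
    then obtain F where F: "\<And>d. (SUP \<tau>. W d \<tau>) - e < W d (F d)" by metis
    have "(INF d. SUP \<tau>. W d \<tau>) - e \<le> (INF d. W d (F d))"
    proof (rule cINF_greatest)
      fix d
      have "(INF d. SUP \<tau>. W d \<tau>) \<le> (SUP \<tau>. W d \<tau>)"
        by (rule cINF_lower[OF bdd_below_absI[of _ B]]) (auto simp: bS)
      then show "(INF d. SUP \<tau>. W d \<tau>) - e \<le> W d (F d)" using F[of d] by auto
    qed auto
    also have "(INF d. W d (F d)) \<le> (SUP F. INF d. W d (F d))"
      by (rule cSUP_upper[OF _ bdd_above_absI[of _ B]]) (auto intro!: abs_INF_le simp: B)
    finally show "(INF d. SUP \<tau>. W d \<tau>) \<le> (SUP F. INF d. W d (F d)) + e" by auto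
  qed
qed

lemma cont_coord: "continuous_on S (\<lambda>q::'h \<Rightarrow> 'a \<Rightarrow> real. q h a)"
  by (rule continuous_on_product_then_coordinatewise[OF continuous_on_product_then_coordinatewise[OF continuous_on_id]])

lemma cont_lip:
  fixes V :: "('w \<Rightarrow> real) \<Rightarrow> real" and Y :: "'q::topological_space \<Rightarrow> 'w \<Rightarrow> real"
  assumes lip: "\<And>y y'. \<bar>V y - V y'\<bar> \<le> K * (\<Sum>w\<in>W. \<bar>y w - y' w\<bar>)" and fin: "finite W"
    and cY: "\<And>w. w \<in> W \<Longrightarrow> continuous_on S (\<lambda>q. Y q w)"
  shows "continuous_on S (\<lambda>q. V (Y q))"
  unfolding continuous_on_def
proof
  fix x assume x: "x \<in> S"
  have "((\<lambda>q. K * (\<Sum>w\<in>W. \<bar>Y q w - Y x w\<bar>)) \<longlongrightarrow> K * (\<Sum>w\<in>W. \<bar>Y x w - Y x w\<bar>)) (at x within S)"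
    using cY x unfolding continuous_on_def by (intro tendsto_intros) auto
  then have l0: "((\<lambda>q. K * (\<Sum>w\<in>W. \<bar>Y q w - Y x w\<bar>)) \<longlongrightarrow> 0) (at x within S)" by simp
  have "((\<lambda>q. V (Y q) - V (Y x)) \<longlongrightarrow> 0) (at x within S)"
    by (rule Lim_null_comparison[OF _ l0]) (auto simp: lip)
  then show "((\<lambda>q. V (Y q)) \<longlongrightarrow> V (Y x)) (at x within S)"
    by (rule LIM_zero_cancel)
qed



lemma finite_hist: "finite (hist t :: ('a::finite \<times> 'z::finite) list set)"
  using finite_lists_length_eq[of "UNIV :: ('a \<times> 'z) set" t] unfolding hist_def by simp

lemma hist_butlast: "h \<in> hist (Suc t) \<Longrightarrow> butlast h \<in> hist t"
  unfolding hist_def by auto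

lemma hist_Suc_ne: "h \<in> hist (Suc t) \<Longrightarrow> h \<noteq> []"
  unfolding hist_def by auto

definition M1 :: "nat \<Rightarrow> ('s::finite \<times> ('a1::finite \<times> 'z1::finite) list \<times> ('a2::finite \<times> 'z2::finite) list \<Rightarrow> real) \<Rightarrow> real" where
  "M1 t x = (\<Sum>w\<in>UNIV \<times> hist t \<times> hist t. \<bar>x w\<bar>)"

definition M2 :: "nat \<Rightarrow> ('s::finite \<times> ('a1::finite \<times> 'z1::finite) list \<times> ('a2::finite \<times> 'z2::finite) list \<times> 'a1 \<Rightarrow> real) \<Rightarrow> real" where
  "M2 t y = (\<Sum>w\<in>UNIV \<times> hist t \<times> hist t \<times> UNIV. \<bar>y w\<bar>)"

lemma M1_nonneg: "0 \<le> M1 t x" unfolding M1_def by (simp add: sum_nonneg)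
lemma M2_nonneg: "0 \<le> M2 t x" unfolding M2_def by (simp add: sum_nonneg)

lemma le_M1: "h1 \<in> hist t \<Longrightarrow> h2 \<in> hist t \<Longrightarrow> \<bar>x (s, h1, h2)\<bar> \<le> M1 t x"
  unfolding M1_def by (rule member_le_sum[where f="\<lambda>w. \<bar>x w\<bar>"]) (auto simp: finite_hist)

lemma le_M2: "h1 \<in> hist t \<Longrightarrow> h2 \<in> hist t \<Longrightarrow> \<bar>y (s, h1, h2, a)\<bar> \<le> M2 t y"
  unfolding M2_def by (rule member_le_sum[where f="\<lambda>w. \<bar>y w\<bar>"]) (auto simp: finite_hist)

lemma abs_pmf2_le: "\<bar>c * pmf P a * pmf Q b\<bar> \<le> \<bar>c\<bar>"
proof -
  have "pmf P a * pmf Q b \<le> 1" by (intro mult_le_one) (auto simp: pmf_le_1)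
  then have "\<bar>c\<bar> * (pmf P a * pmf Q b) \<le> \<bar>c\<bar>"
    by (intro mult_left_le) auto
  then show ?thesis by (simp add: abs_mult mult.assoc)
qed

lemma abs_pmf1_le: "\<bar>c * pmf P a\<bar> \<le> \<bar>c\<bar>"
  by (simp add: abs_mult mult_left_le pmf_le_1)

lemma tau1_bound:
  "\<exists>C\<ge>0. \<forall>(x::'s::finite \<times> ('a1::finite \<times> 'z1::finite) list \<times> ('a2::finite \<times> 'z2::finite) list \<Rightarrow> real) d.
      M2 t (tau1 x d) \<le> C * M1 t x"
proof -
  define D where "D = (UNIV \<times> hist t \<times> hist t \<times> UNIV :: ('s \<times> ('a1 \<times> 'z1) list \<times> ('a2 \<times> 'z2) list \<times> 'a1) set)"
  have "M2 t (tau1 x d) \<le> real (card D) * M1 t x"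
    for x :: "'s \<times> ('a1 \<times> 'z1) list \<times> ('a2 \<times> 'z2) list \<Rightarrow> real" and d
    unfolding M2_def D_def[symmetric]
  proof (rule sum_bounded_above)
    fix w assume "w \<in> D"
    then obtain s h1 h2 a1 where w: "w = (s, h1, h2, a1)" "h1 \<in> hist t" "h2 \<in> hist t"
      unfolding D_def by auto
    have "\<bar>tau1 x d w\<bar> = \<bar>x (s, h1, h2) * pmf (d h1) a1\<bar>" by (simp add: w tau1_def)
    also have "\<dots> \<le> \<bar>x (s, h1, h2)\<bar>" by (rule abs_pmf1_le)
    also have "\<dots> \<le> M1 t x" using w by (intro le_M1)
    finally show "\<bar>tau1 x d w\<bar> \<le> M1 t x" .
  qed
  then show ?thesis by (intro exI[of _ "real (card D)"]) auto
qed

lemma tau2_bound: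
  "\<exists>C\<ge>0. \<forall>(y::'s::finite \<times> ('a1::finite \<times> 'z1::finite) list \<times> ('a2::finite \<times> 'z2::finite) list \<times> 'a1 \<Rightarrow> real) d.
      M1 (Suc t) (tau2 p y d) \<le> C * M2 t y"
proof -
  define D where "D = (UNIV \<times> hist (Suc t) \<times> hist (Suc t) :: ('s \<times> ('a1 \<times> 'z1) list \<times> ('a2 \<times> 'z2) list) set)"
  have "M1 (Suc t) (tau2 p y d) \<le> real (card D) * (real (card (UNIV :: 's set)) * M2 t y)"
    for y :: "'s \<times> ('a1 \<times> 'z1) list \<times> ('a2 \<times> 'z2) list \<times> 'a1 \<Rightarrow> real" and d
    unfolding M1_def D_def[symmetric]
  proof (rule sum_bounded_above)
    fix w assume "w \<in> D"
    then obtain s' h1 h2 where w: "w = (s', h1, h2)" "h1 \<in> hist (Suc t)" "h2 \<in> hist (Suc t)"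
      unfolding D_def by auto
    obtain a1 z1 where l1: "last h1 = (a1, z1)" by (cases "last h1")
    obtain a2 z2 where l2: "last h2 = (a2, z2)" by (cases "last h2")
    have "\<bar>tau2 p y d w\<bar> = \<bar>\<Sum>s\<in>UNIV. y (s, butlast h1, butlast h2, a1) * pmf (d (butlast h2)) a2
                      * pmf (p s a1 a2) (s', z1, z2)\<bar>"
      using w hist_Suc_ne[OF w(2)] hist_Suc_ne[OF w(3)] by (simp add: tau2_def l1 l2)
    also have "\<dots> \<le> (\<Sum>s\<in>UNIV. \<bar>y (s, butlast h1, butlast h2, a1) * pmf (d (butlast h2)) a2
                      * pmf (p s a1 a2) (s', z1, z2)\<bar>)" by (rule sum_abs)
    also have "\<dots> \<le> (\<Sum>s\<in>(UNIV::'s set). M2 t y)"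
    proof (rule sum_mono)
      fix s :: 's
      have "\<bar>y (s, butlast h1, butlast h2, a1) * pmf (d (butlast h2)) a2
                      * pmf (p s a1 a2) (s', z1, z2)\<bar> \<le> \<bar>y (s, butlast h1, butlast h2, a1)\<bar>"
        by (rule abs_pmf2_le)
      also have "\<dots> \<le> M2 t y" using w by (intro le_M2 hist_butlast)
      finally show "\<bar>y (s, butlast h1, butlast h2, a1) * pmf (d (butlast h2)) a2
                      * pmf (p s a1 a2) (s', z1, z2)\<bar> \<le> M2 t y" .
    qed
    also have "\<dots> = real (card (UNIV :: 's set)) * M2 t y" by simp
    finally show "\<bar>tau2 p y d w\<bar> \<le> real (card (UNIV :: 's set)) * M2 t y" .
  qed
  then show ?thesis by (intro exI[of _ "real (card D) * real (card (UNIV :: 's set))"]) (auto simp: mult.assoc)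
qed

lemma rho2_bound:
  "\<exists>A\<ge>0. \<forall>(y::'s::finite \<times> ('a1::finite \<times> 'z1::finite) list \<times> ('a2::finite \<times> 'z2::finite) list \<times> 'a1 \<Rightarrow> real) d.
      \<bar>rho2 t r y d\<bar> \<le> A * M2 t y"
proof -
  define D where "D = (UNIV \<times> hist t \<times> hist t \<times> UNIV :: ('s \<times> ('a1 \<times> 'z1) list \<times> ('a2 \<times> 'z2) list \<times> 'a1) set)"
  define R where "R = (\<Sum>(s,a1,a2)\<in>UNIV. \<bar>r s a1 a2\<bar>)"
  have R: "\<bar>r s a1 a2\<bar> \<le> R" for s a1 a2
    unfolding R_def using member_le_sum[of "(s,a1,a2)" UNIV "\<lambda>(s,a1,a2). \<bar>r s a1 a2\<bar>"] by auto
  have "\<bar>rho2 t r y d\<bar> \<le> real (card D) * (real (card (UNIV :: 'a2 set)) * (M2 t y * R))"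
    for y :: "'s \<times> ('a1 \<times> 'z1) list \<times> ('a2 \<times> 'z2) list \<times> 'a1 \<Rightarrow> real" and d
  proof -
    have "\<bar>rho2 t r y d\<bar> \<le> (\<Sum>w\<in>D. \<bar>(case w of (s, h1, h2, a1) \<Rightarrow> \<Sum>a2\<in>UNIV. y (s, h1, h2, a1) * pmf (d h2) a2 * r s a1 a2)\<bar>)"
      unfolding rho2_def D_def by (rule sum_abs)
    also have "\<dots> \<le> real (card D) * (real (card (UNIV :: 'a2 set)) * (M2 t y * R))"
    proof (rule sum_bounded_above)
      fix w assume "w \<in> D"
      then obtain s h1 h2 a1 where w: "w = (s, h1, h2, a1)" "h1 \<in> hist t" "h2 \<in> hist t"
        unfolding D_def by auto
      have "\<bar>\<Sum>a2\<in>UNIV. y (s, h1, h2, a1) * pmf (d h2) a2 * r s a1 a2\<bar>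
           \<le> (\<Sum>a2\<in>UNIV. \<bar>y (s, h1, h2, a1) * pmf (d h2) a2 * r s a1 a2\<bar>)" by (rule sum_abs)
      also have "\<dots> \<le> (\<Sum>a2\<in>(UNIV::'a2 set). M2 t y * R)"
      proof (rule sum_mono)
        fix a2
        have "\<bar>y (s, h1, h2, a1) * pmf (d h2) a2 * r s a1 a2\<bar> = \<bar>y (s, h1, h2, a1) * pmf (d h2) a2\<bar> * \<bar>r s a1 a2\<bar>"
          by (simp add: abs_mult)
        also have "\<dots> \<le> M2 t y * R"
          using abs_pmf1_le[of "y (s, h1, h2, a1)" "d h2" a2] le_M2[OF w(2,3), of y s a1] R[of s a1 a2]
          by (intro mult_mono) auto
        finally show "\<bar>y (s, h1, h2, a1) * pmf (d h2) a2 * r s a1 a2\<bar> \<le> M2 t y * R" .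
      qed
      also have "\<dots> = real (card (UNIV :: 'a2 set)) * (M2 t y * R)" by simp
      finally show "\<bar>case w of (s, h1, h2, a1) \<Rightarrow> \<Sum>a2\<in>UNIV. y (s, h1, h2, a1) * pmf (d h2) a2 * r s a1 a2\<bar>
           \<le> real (card (UNIV :: 'a2 set)) * (M2 t y * R)" using w by simp
    qed
    finally show ?thesis .
  qed
  moreover have "0 \<le> R" unfolding R_def by (simp add: sum_nonneg split_def)
  ultimately show ?thesis
    by (intro exI[of _ "real (card D) * real (card (UNIV :: 'a2 set)) * R"]) (auto simp: algebra_simps)
qed

lemma tau1_diff: "tau1 (\<lambda>w. x w - x' w) d = (\<lambda>w. tau1 x d w - tau1 x' d w)"
  unfolding tau1_def by (auto simp: fun_eq_iff left_diff_distrib split: prod.split)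

lemma tau2_diff: "tau2 p (\<lambda>w. y w - y' w) d = (\<lambda>w. tau2 p y d w - tau2 p y' d w)"
  unfolding tau2_def by (auto simp: fun_eq_iff left_diff_distrib sum_subtractf split: prod.split)

lemma rho2_diff: "rho2 t r (\<lambda>w. y w - y' w) d = rho2 t r y d - rho2 t r y' d"
  unfolding rho2_def by (simp add: left_diff_distrib sum_subtractf split_def)

lemma play_diff:
  "play n p r g \<sigma>1 \<sigma>2 t x hs - play n p r g \<sigma>1 \<sigma>2 t x' hs = play n p r g \<sigma>1 \<sigma>2 t (\<lambda>w. x w - x' w) hs"
proof (induction n arbitrary: t x x' hs)
  case 0 then show ?case by simp
next
  case (Suc n)
  show ?case
    by (simp add: Let_def rho1_def tau1_diff tau2_diff rho2_diff Suc.IH[symmetric] algebra_simps)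
qed

lemma play_shift:
  "play n p r g \<sigma>1 \<sigma>2 t x (pre @ hs) = play n p r g (\<lambda>l. \<sigma>1 (pre @ l)) (\<lambda>l. \<sigma>2 (pre @ l)) t x hs"
  by (induction n arbitrary: t x hs) (simp_all add: Let_def)



lemma play_shift_Cons:
  "play n p r g \<sigma>1 \<sigma>2 t x (e # hs) = play n p r g (\<lambda>l. \<sigma>1 (e # l)) (\<lambda>l. \<sigma>2 (e # l)) t x hs"
  using play_shift[of n p r g \<sigma>1 \<sigma>2 t x "[e]" hs] by simp

lemma play_bound:
  fixes p :: "'s::finite \<Rightarrow> 'a1::finite \<Rightarrow> 'a2::finite \<Rightarrow> ('s \<times> 'z1::finite \<times> 'z2::finite) pmf"
  assumes g0: "0 \<le> g"
  shows "\<exists>K\<ge>0. \<forall>\<sigma>1 \<sigma>2 x hs. \<bar>play n p r g \<sigma>1 \<sigma>2 t x hs\<bar> \<le> K * M1 t x"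
proof (induction n arbitrary: t)
  case 0 then show ?case by auto
next
  case (Suc n)
  obtain K where K: "K \<ge> 0" "\<And>\<sigma>1 \<sigma>2 x hs. \<bar>play n p r g \<sigma>1 \<sigma>2 (Suc t) x hs\<bar> \<le> K * M1 (Suc t) x"
    using Suc.IH[of "Suc t"] by blast
  obtain A where A: "A \<ge> 0" "\<And>y d. \<bar>rho2 t r (y::'s \<times> ('a1 \<times> 'z1) list \<times> ('a2 \<times> 'z2) list \<times> 'a1 \<Rightarrow> real) d\<bar> \<le> A * M2 t y"
    using rho2_bound[of t r] by blast
  obtain B where B: "B \<ge> 0" "\<And>y d. M1 (Suc t) (tau2 p (y::'s \<times> ('a1 \<times> 'z1) list \<times> ('a2 \<times> 'z2) list \<times> 'a1 \<Rightarrow> real) d) \<le> B * M2 t y"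
    using tau2_bound[of t p] by blast
  obtain C where C: "C \<ge> 0" "\<And>x d. M2 t (tau1 (x::'s \<times> ('a1 \<times> 'z1) list \<times> ('a2 \<times> 'z2) list \<Rightarrow> real) d) \<le> C * M1 t x"
    using tau1_bound[of t] by blast
  have "\<bar>play (Suc n) p r g \<sigma>1 \<sigma>2 t x hs\<bar> \<le> ((A + g * K * B) * C) * M1 t x" for \<sigma>1 \<sigma>2 x hs
  proof -
    define d1 where "d1 = \<sigma>1 hs"
    define y where "y = tau1 x d1"
    define d2 where "d2 = \<sigma>2 (hs @ [Inl d1])"
    have "play (Suc n) p r g \<sigma>1 \<sigma>2 t x hs = rho2 t r y d2 + g * play n p r g \<sigma>1 \<sigma>2 (Suc t) (tau2 p y d2) (hs @ [Inl d1] @ [Inr d2])"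
      by (simp add: Let_def rho1_def d1_def y_def d2_def)
    also have "\<bar>\<dots>\<bar> \<le> \<bar>rho2 t r y d2\<bar> + g * \<bar>play n p r g \<sigma>1 \<sigma>2 (Suc t) (tau2 p y d2) (hs @ [Inl d1] @ [Inr d2])\<bar>"
      using g0 by (simp add: abs_mult abs_triangle_ineq[THEN order_trans])
    also have "\<dots> \<le> A * M2 t y + g * (K * (B * M2 t y))"
      using A(2)[of y d2] K(2) B(2)[of y d2] g0 K(1)
      by (intro add_mono mult_left_mono order_trans[OF K(2)]) auto
    also have "\<dots> = (A + g * K * B) * M2 t y" by (simp add: algebra_simps)
    also have "\<dots> \<le> (A + g * K * B) * (C * M1 t x)"
      unfolding y_def using A(1) B(1) K(1) g0 C(2) by (intro mult_left_mono) auto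
    finally show ?thesis by (simp add: mult.assoc)
  qed
  moreover have "0 \<le> (A + g * K * B) * C" using A(1) B(1) K(1) g0 C(1) by auto
  ultimately show ?case by blast
qed

context
  fixes p :: "'s::finite \<Rightarrow> 'a1::finite \<Rightarrow> 'a2::finite \<Rightarrow> ('s \<times> 'z1::finite \<times> 'z2::finite) pmf"
    and r :: "'s \<Rightarrow> 'a1 \<Rightarrow> 'a2 \<Rightarrow> real" and g :: real and L :: nat
  assumes g0: "0 \<le> g"
begin

lemma pay1_props:
  "\<exists>K\<ge>0. \<forall>\<sigma>1 \<sigma>2 x x'. \<bar>pay1 p r g L \<sigma>1 \<sigma>2 t x\<bar> \<le> K * M1 t x
      \<and> pay1 p r g L \<sigma>1 \<sigma>2 t x - pay1 p r g L \<sigma>1 \<sigma>2 t x' = pay1 p r g L \<sigma>1 \<sigma>2 t (\<lambda>w. x w - x' w)"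
  using play_bound[OF g0, of "L - t" p r t] unfolding pay1_def by (auto simp: play_diff)

lemma pay2_props:
  "\<exists>K\<ge>0. \<forall>\<sigma>1 \<sigma>2 y y'. \<bar>pay2 p r g L \<sigma>1 \<sigma>2 t y\<bar> \<le> K * M2 t y
      \<and> pay2 p r g L \<sigma>1 \<sigma>2 t y - pay2 p r g L \<sigma>1 \<sigma>2 t y' = pay2 p r g L \<sigma>1 \<sigma>2 t (\<lambda>w. y w - y' w)"
proof (cases "L \<le> t")
  case True then show ?thesis unfolding pay2_def by auto
next
  case False
  obtain K where K: "K \<ge> 0" "\<And>\<sigma>1 \<sigma>2 x hs. \<bar>play (L - Suc t) p r g \<sigma>1 \<sigma>2 (Suc t) x hs\<bar> \<le> K * M1 (Suc t) x"
    using play_bound[OF g0, of "L - Suc t" p r "Suc t"] by blast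
  obtain A where A: "A \<ge> 0" "\<And>y d. \<bar>rho2 t r (y::'s \<times> ('a1 \<times> 'z1) list \<times> ('a2 \<times> 'z2) list \<times> 'a1 \<Rightarrow> real) d\<bar> \<le> A * M2 t y"
    using rho2_bound[of t r] by blast
  obtain B where B: "B \<ge> 0" "\<And>y d. M1 (Suc t) (tau2 p (y::'s \<times> ('a1 \<times> 'z1) list \<times> ('a2 \<times> 'z2) list \<times> 'a1 \<Rightarrow> real) d) \<le> B * M2 t y"
    using tau2_bound[of t p] by blast
  have bnd: "\<bar>pay2 p r g L \<sigma>1 \<sigma>2 t y\<bar> \<le> (A + g * K * B) * M2 t y" for \<sigma>1 \<sigma>2 y
  proof -
    define d2 where "d2 = \<sigma>2 []"
    have "pay2 p r g L \<sigma>1 \<sigma>2 t y = rho2 t r y d2 + g * play (L - Suc t) p r g \<sigma>1 \<sigma>2 (Suc t) (tau2 p y d2) [Inr d2]"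
      using False by (simp add: pay2_def d2_def Let_def)
    also have "\<bar>\<dots>\<bar> \<le> \<bar>rho2 t r y d2\<bar> + g * \<bar>play (L - Suc t) p r g \<sigma>1 \<sigma>2 (Suc t) (tau2 p y d2) [Inr d2]\<bar>"
      using g0 by (simp add: abs_mult abs_triangle_ineq[THEN order_trans])
    also have "\<dots> \<le> A * M2 t y + g * (K * (B * M2 t y))"
      using A(2)[of y d2] K(2) B(2)[of y d2] g0 K(1)
      by (intro add_mono mult_left_mono order_trans[OF K(2)]) auto
    also have "\<dots> = (A + g * K * B) * M2 t y" by (simp add: algebra_simps)
    finally show ?thesis .
  qed
  have dif: "pay2 p r g L \<sigma>1 \<sigma>2 t y - pay2 p r g L \<sigma>1 \<sigma>2 t y' = pay2 p r g L \<sigma>1 \<sigma>2 t (\<lambda>w. y w - y' w)" for \<sigma>1 \<sigma>2 y y'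
    using False by (simp add: pay2_def Let_def rho2_diff tau2_diff play_diff[symmetric] algebra_simps)
  have "0 \<le> A + g * K * B" using A(1) B(1) K(1) g0 by auto
  with bnd dif show ?thesis by blast
qed

lemma vseq1_props:
  "\<exists>K\<ge>0. \<forall>x x'. \<bar>vseq1 p r g L t x\<bar> \<le> K * M1 t x
      \<and> \<bar>vseq1 p r g L t x - vseq1 p r g L t x'\<bar> \<le> K * M1 t (\<lambda>w. x w - x' w)"
proof -
  obtain K where K: "K \<ge> 0" "\<And>\<sigma>1 \<sigma>2 x x'. \<bar>pay1 p r g L \<sigma>1 \<sigma>2 t x\<bar> \<le> K * M1 t x"
    "\<And>\<sigma>1 \<sigma>2 x x'. pay1 p r g L \<sigma>1 \<sigma>2 t x - pay1 p r g L \<sigma>1 \<sigma>2 t x' = pay1 p r g L \<sigma>1 \<sigma>2 t (\<lambda>w. x w - x' w)"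
    using pay1_props[of t] by blast
  have "\<bar>vseq1 p r g L t x\<bar> \<le> K * M1 t x" for x
    unfolding vseq1_def by (intro abs_SUP_le abs_INF_le K(2))
  moreover have "\<bar>vseq1 p r g L t x - vseq1 p r g L t x'\<bar> \<le> K * M1 t (\<lambda>w. x w - x' w)" for x x'
    unfolding vseq1_def
  proof (rule supinf_lip[where B="K * (M1 t x + M1 t x')"])
    fix a b
    show "\<bar>pay1 p r g L a b t x\<bar> \<le> K * (M1 t x + M1 t x')"
      using K(2)[of a b x] mult_nonneg_nonneg[OF K(1) M1_nonneg[of t x']] by (simp add: distrib_left)
    show "\<bar>pay1 p r g L a b t x'\<bar> \<le> K * (M1 t x + M1 t x')"
      using K(2)[of a b x'] mult_nonneg_nonneg[OF K(1) M1_nonneg[of t x]] by (simp add: distrib_left)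
    show "\<bar>pay1 p r g L a b t x - pay1 p r g L a b t x'\<bar> \<le> K * M1 t (\<lambda>w. x w - x' w)"
      using K(2)[of a b "\<lambda>w. x w - x' w"] K(3)[of a b x x'] by simp
  qed
  ultimately show ?thesis using K(1) by blast
qed

lemma vseq2_props:
  "\<exists>K\<ge>0. \<forall>y y'. \<bar>vseq2 p r g L t y\<bar> \<le> K * M2 t y
      \<and> \<bar>vseq2 p r g L t y - vseq2 p r g L t y'\<bar> \<le> K * M2 t (\<lambda>w. y w - y' w)"
proof -
  obtain K where K: "K \<ge> 0" "\<And>\<sigma>1 \<sigma>2 x. \<bar>pay2 p r g L \<sigma>1 \<sigma>2 t x\<bar> \<le> K * M2 t x"
    "\<And>\<sigma>1 \<sigma>2 x x'. pay2 p r g L \<sigma>1 \<sigma>2 t x - pay2 p r g L \<sigma>1 \<sigma>2 t x' = pay2 p r g L \<sigma>1 \<sigma>2 t (\<lambda>w. x w - x' w)"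
    using pay2_props[of t] by blast
  have "\<bar>vseq2 p r g L t x\<bar> \<le> K * M2 t x" for x
    unfolding vseq2_def by (intro abs_SUP_le abs_INF_le K(2))
  moreover have "\<bar>vseq2 p r g L t x - vseq2 p r g L t x'\<bar> \<le> K * M2 t (\<lambda>w. x w - x' w)" for x x'
    unfolding vseq2_def
  proof (rule supinf_lip[where B="K * (M2 t x + M2 t x')"])
    fix a b
    show "\<bar>pay2 p r g L a b t x\<bar> \<le> K * (M2 t x + M2 t x')"
      using K(2)[of a b x] mult_nonneg_nonneg[OF K(1) M2_nonneg[of t x']] by (simp add: distrib_left)
    show "\<bar>pay2 p r g L a b t x'\<bar> \<le> K * (M2 t x + M2 t x')"
      using K(2)[of a b x'] mult_nonneg_nonneg[OF K(1) M2_nonneg[of t x]] by (simp add: distrib_left)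
    show "\<bar>pay2 p r g L a b t x - pay2 p r g L a b t x'\<bar> \<le> K * M2 t (\<lambda>w. x w - x' w)"
      using K(2)[of a b "\<lambda>w. x w - x' w"] K(3)[of a b x x'] by simp
  qed
  ultimately show ?thesis using K(1) by blast
qed

end


type_synonym ('a, 'z) dr = "('a \<times> 'z) list \<Rightarrow> 'a pmf"
type_synonym ('a1, 'z1, 'a2, 'z2) hs = "(('a1, 'z1) dr + ('a2, 'z2) dr) list"

context
  fixes p :: "'s::finite \<Rightarrow> 'a1::finite \<Rightarrow> 'a2::finite \<Rightarrow> ('s \<times> 'z1::finite \<times> 'z2::finite) pmf"
    and r :: "'s \<Rightarrow> 'a1 \<Rightarrow> 'a2 \<Rightarrow> real" and g :: real and L :: nat
  assumes g0: "0 \<le> g"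
begin

lemma claimA:
  assumes tL: "t < L"
  shows "vseq1 p r g L t x = (SUP d. vseq2 p r g L t (tau1 x d))"
proof -
  obtain n where n: "L - t = Suc n" "L - Suc t = n" using tL by (intro that[of "L - Suc t"]) auto
  obtain K2 where K2: "K2 \<ge> 0" "\<And>\<sigma>1 \<sigma>2 y. \<bar>pay2 p r g L \<sigma>1 \<sigma>2 t y\<bar> \<le> K2 * M2 t y"
    using pay2_props[OF g0, where p=p and r=r and L=L and t=t] by blast
  obtain C where C: "C \<ge> 0" "\<And>x d. M2 t (tau1 (x::'s \<times> ('a1 \<times> 'z1) list \<times> ('a2 \<times> 'z2) list \<Rightarrow> real) d) \<le> C * M1 t x"
    using tau1_bound[of t] by blast
  define B where "B = K2 * (C * M1 t x)"
  have bnd: "\<bar>pay2 p r g L \<tau> \<tau>2 t (tau1 x d)\<bar> \<le> B" for \<tau> \<tau>2 d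
    unfolding B_def using K2(2)[of \<tau> \<tau>2 "tau1 x d"] mult_left_mono[OF C(2)[of x d] K2(1)] by linarith
  define G where "G d \<tau> = (INF \<tau>2. pay2 p r g L \<tau> \<tau>2 t (tau1 x d))" for d \<tau>
  have Gb: "\<bar>G d \<tau>\<bar> \<le> B" for d \<tau> unfolding G_def by (intro abs_INF_le bnd)
  have SGb: "\<bar>SUP \<tau>. G d \<tau>\<bar> \<le> B" for d by (intro abs_SUP_le Gb)
  have v2: "vseq2 p r g L t (tau1 x d) = (SUP \<tau>. G d \<tau>)" for d unfolding vseq2_def G_def ..
  define sh where "sh d \<sigma> = (\<lambda>l. \<sigma> (Inl d # l))"
    for d and \<sigma> :: "('a1, 'z1, 'a2, 'z2) hs \<Rightarrow> ('a1, 'z1) dr"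
  define sh2 where "sh2 d \<sigma> = (\<lambda>l. \<sigma> (Inl d # l))"
    for d and \<sigma> :: "('a1, 'z1, 'a2, 'z2) hs \<Rightarrow> ('a2, 'z2) dr"
  have pay_eq: "pay1 p r g L \<sigma>1 \<sigma>2 t x = pay2 p r g L (sh (\<sigma>1 []) \<sigma>1) (sh2 (\<sigma>1 []) \<sigma>2) t (tau1 x (\<sigma>1 []))" for \<sigma>1 \<sigma>2
    using tL unfolding pay1_def pay2_def n sh_def sh2_def by (simp add: Let_def rho1_def play_shift_Cons)
  have surj: "surj (sh2 d)" for d
  proof (rule surjI)
    fix y :: "('a1, 'z1, 'a2, 'z2) hs \<Rightarrow> ('a2, 'z2) dr"
    show "sh2 d (\<lambda>l. y (tl l)) = y" by (simp add: sh2_def)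
  qed
  have inf_eq: "(INF \<sigma>2. pay1 p r g L \<sigma>1 \<sigma>2 t x) = G (\<sigma>1 []) (sh (\<sigma>1 []) \<sigma>1)" for \<sigma>1
    unfolding pay_eq G_def by (rule INF_surj[OF surj])
  have "vseq1 p r g L t x = (SUP \<sigma>1. G (\<sigma>1 []) (sh (\<sigma>1 []) \<sigma>1))"
    unfolding vseq1_def inf_eq ..
  also have "\<dots> = (SUP d. SUP \<tau>. G d \<tau>)"
  proof (rule antisym)
    show "(SUP \<sigma>1. G (\<sigma>1 []) (sh (\<sigma>1 []) \<sigma>1)) \<le> (SUP d. SUP \<tau>. G d \<tau>)"
    proof (rule cSUP_least)
      fix \<sigma>1 :: "('a1, 'z1, 'a2, 'z2) hs \<Rightarrow> ('a1, 'z1) dr"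
      have "G (\<sigma>1 []) (sh (\<sigma>1 []) \<sigma>1) \<le> (SUP \<tau>. G (\<sigma>1 []) \<tau>)"
        by (rule cSUP_upper[OF _ bdd_above_absI[OF Gb]]) auto
      also have "\<dots> \<le> (SUP d. SUP \<tau>. G d \<tau>)"
        by (rule cSUP_upper[OF _ bdd_above_absI[OF SGb]]) auto
      finally show "G (\<sigma>1 []) (sh (\<sigma>1 []) \<sigma>1) \<le> (SUP d. SUP \<tau>. G d \<tau>)" .
    qed auto
    show "(SUP d. SUP \<tau>. G d \<tau>) \<le> (SUP \<sigma>1. G (\<sigma>1 []) (sh (\<sigma>1 []) \<sigma>1))"
    proof (rule cSUP_least)
      fix d
      show "(SUP \<tau>. G d \<tau>) \<le> (SUP \<sigma>1. G (\<sigma>1 []) (sh (\<sigma>1 []) \<sigma>1))"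
      proof (rule cSUP_least)
        fix \<tau>
        define \<sigma> where "\<sigma> = (\<lambda>l::('a1, 'z1, 'a2, 'z2) hs. if l = [] then d else \<tau> (tl l))"
        have "\<sigma> [] = d" "sh d \<sigma> = \<tau>" unfolding \<sigma>_def sh_def by auto
        then have "G d \<tau> = G (\<sigma> []) (sh (\<sigma> []) \<sigma>)" by simp
        also have "\<dots> \<le> (SUP \<sigma>1. G (\<sigma>1 []) (sh (\<sigma>1 []) \<sigma>1))"
          by (rule cSUP_upper[OF _ bdd_above_absI[of _ B]]) (auto intro: Gb)
        finally show "G d \<tau> \<le> (SUP \<sigma>1. G (\<sigma>1 []) (sh (\<sigma>1 []) \<sigma>1))" .
      qed auto
    qed auto
  qed
  finally show ?thesis unfolding v2 .
qed

end


context
  fixes p :: "'s::finite \<Rightarrow> 'a1::finite \<Rightarrow> 'a2::finite \<Rightarrow> ('s \<times> 'z1::finite \<times> 'z2::finite) pmf"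
    and r :: "'s \<Rightarrow> 'a1 \<Rightarrow> 'a2 \<Rightarrow> real" and g :: real and L :: nat
  assumes g0: "0 \<le> g"
begin

lemma claimB:
  assumes tL: "t < L"
  shows "vseq2 p r g L t y = (INF d. rho2 t r y d + g * vseq1 p r g L (Suc t) (tau2 p y d))"
proof -
  obtain K1 where K1: "K1 \<ge> 0" "\<And>\<sigma>1 \<sigma>2 x. \<bar>pay1 p r g L \<sigma>1 \<sigma>2 (Suc t) x\<bar> \<le> K1 * M1 (Suc t) x"
    using pay1_props[OF g0, where p=p and r=r and L=L and t="Suc t"] by blast
  obtain A where A: "A \<ge> 0" "\<And>y d. \<bar>rho2 t r (y::'s \<times> ('a1 \<times> 'z1) list \<times> ('a2 \<times> 'z2) list \<times> 'a1 \<Rightarrow> real) d\<bar> \<le> A * M2 t y"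
    using rho2_bound[of t r] by blast
  obtain Bt where Bt: "Bt \<ge> 0" "\<And>y d. M1 (Suc t) (tau2 p (y::'s \<times> ('a1 \<times> 'z1) list \<times> ('a2 \<times> 'z2) list \<times> 'a1 \<Rightarrow> real) d) \<le> Bt * M2 t y"
    using tau2_bound[of t p] by blast
  define P where "P = K1 * (Bt * M2 t y)"
  have Pb: "\<bar>pay1 p r g L \<tau>1 \<tau>2 (Suc t) (tau2 p y d)\<bar> \<le> P" for \<tau>1 \<tau>2 d
    unfolding P_def using K1(2)[of \<tau>1 \<tau>2 "tau2 p y d"] mult_left_mono[OF Bt(2)[of y d] K1(1)] by linarith
  define Bd where "Bd = A * M2 t y + g * P"
  define \<Phi> where "\<Phi> d \<tau>1 \<tau>2 = rho2 t r y d + g * pay1 p r g L \<tau>1 \<tau>2 (Suc t) (tau2 p y d)" for d \<tau>1 \<tau>2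
  have \<Phi>b: "\<bar>\<Phi> d \<tau>1 \<tau>2\<bar> \<le> Bd" for d \<tau>1 \<tau>2
  proof -
    have "\<bar>\<Phi> d \<tau>1 \<tau>2\<bar> \<le> \<bar>rho2 t r y d\<bar> + g * \<bar>pay1 p r g L \<tau>1 \<tau>2 (Suc t) (tau2 p y d)\<bar>"
      unfolding \<Phi>_def using g0 by (simp add: abs_mult abs_triangle_ineq[THEN order_trans])
    also have "\<dots> \<le> A * M2 t y + g * P"
      using A(2)[of y d] Pb[of \<tau>1 \<tau>2 d] g0 by (intro add_mono mult_left_mono) auto
    finally show ?thesis unfolding Bd_def .
  qed
  define W where "W d \<tau>1 = (INF \<tau>2. \<Phi> d \<tau>1 \<tau>2)" for d \<tau>1
  have Wb: "\<bar>W d \<tau>1\<bar> \<le> Bd" for d \<tau>1 unfolding W_def by (intro abs_INF_le \<Phi>b)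
  define sh where "sh d \<sigma> = (\<lambda>l. \<sigma> (Inr d # l))"
    for d and \<sigma> :: "('a1, 'z1, 'a2, 'z2) hs \<Rightarrow> ('a1, 'z1) dr"
  define sh2 where "sh2 d \<sigma> = (\<lambda>l. \<sigma> (Inr d # l))"
    for d and \<sigma> :: "('a1, 'z1, 'a2, 'z2) hs \<Rightarrow> ('a2, 'z2) dr"
  have pay_eq: "pay2 p r g L \<sigma>1 \<sigma>2 t y = \<Phi> (\<sigma>2 []) (sh (\<sigma>2 []) \<sigma>1) (sh2 (\<sigma>2 []) \<sigma>2)" for \<sigma>1 \<sigma>2
    using tL unfolding pay1_def pay2_def sh_def sh2_def \<Phi>_def by (simp add: Let_def play_shift_Cons)
  have payb: "\<bar>pay2 p r g L \<sigma>1 \<sigma>2 t y\<bar> \<le> Bd" for \<sigma>1 \<sigma>2 unfolding pay_eq by (rule \<Phi>b)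
  have inner: "(INF \<sigma>2. pay2 p r g L \<sigma>1 \<sigma>2 t y) = (INF d. W d (sh d \<sigma>1))" for \<sigma>1
  proof (rule antisym)
    show "(INF \<sigma>2. pay2 p r g L \<sigma>1 \<sigma>2 t y) \<le> (INF d. W d (sh d \<sigma>1))"
    proof (rule cINF_greatest)
      fix d
      show "(INF \<sigma>2. pay2 p r g L \<sigma>1 \<sigma>2 t y) \<le> W d (sh d \<sigma>1)"
        unfolding W_def
      proof (rule cINF_greatest)
        fix \<tau>2
        define \<sigma> where "\<sigma> = (\<lambda>l::('a1, 'z1, 'a2, 'z2) hs. if l = [] then d else \<tau>2 (tl l))"
        have e: "\<sigma> [] = d" "sh2 d \<sigma> = \<tau>2" unfolding \<sigma>_def sh2_def by auto
        have "(INF \<sigma>2. pay2 p r g L \<sigma>1 \<sigma>2 t y) \<le> pay2 p r g L \<sigma>1 \<sigma> t y"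
          by (rule cINF_lower[OF bdd_below_absI[OF payb]]) auto
        also have "\<dots> = \<Phi> d (sh d \<sigma>1) \<tau>2" unfolding pay_eq e ..
        finally show "(INF \<sigma>2. pay2 p r g L \<sigma>1 \<sigma>2 t y) \<le> \<Phi> d (sh d \<sigma>1) \<tau>2" .
      qed auto
    qed auto
    show "(INF d. W d (sh d \<sigma>1)) \<le> (INF \<sigma>2. pay2 p r g L \<sigma>1 \<sigma>2 t y)"
    proof (rule cINF_greatest)
      fix \<sigma>2 :: "('a1, 'z1, 'a2, 'z2) hs \<Rightarrow> ('a2, 'z2) dr"
      have "(INF d. W d (sh d \<sigma>1)) \<le> W (\<sigma>2 []) (sh (\<sigma>2 []) \<sigma>1)"
        by (rule cINF_lower[OF bdd_below_absI[of _ Bd]]) (auto intro: Wb)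
      also have "\<dots> \<le> \<Phi> (\<sigma>2 []) (sh (\<sigma>2 []) \<sigma>1) (sh2 (\<sigma>2 []) \<sigma>2)"
        unfolding W_def by (rule cINF_lower[OF bdd_below_absI[of _ Bd]]) (auto intro: \<Phi>b)
      also have "\<dots> = pay2 p r g L \<sigma>1 \<sigma>2 t y" unfolding pay_eq ..
      finally show "(INF d. W d (sh d \<sigma>1)) \<le> pay2 p r g L \<sigma>1 \<sigma>2 t y" .
    qed auto
  qed
  have surj: "surj (\<lambda>\<sigma>1 d. sh d \<sigma>1)"
  proof (rule surjI)
    fix F :: "('a2, 'z2) dr \<Rightarrow> ('a1, 'z1, 'a2, 'z2) hs \<Rightarrow> ('a1, 'z1) dr"
    show "(\<lambda>d. sh d (\<lambda>l. case l of (Inr d' # l') \<Rightarrow> F d' l' | _ \<Rightarrow> undefined)) = F"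
      by (simp add: sh_def)
  qed
  have "vseq2 p r g L t y = (SUP \<sigma>1. INF d. W d (sh d \<sigma>1))"
    unfolding vseq2_def inner ..
  also have "\<dots> = (SUP F. INF d. W d (F d))"
    using SUP_surj[OF surj, of "\<lambda>F. INF d. W d (F d)"] by simp
  also have "\<dots> = (INF d. SUP \<tau>. W d \<tau>)"
    by (rule sup_inf_exchange[OF Wb])
  also have "\<dots> = (INF d. rho2 t r y d + g * vseq1 p r g L (Suc t) (tau2 p y d))"
  proof -
    have "W d \<tau> = rho2 t r y d + g * (INF \<tau>2. pay1 p r g L \<tau> \<tau>2 (Suc t) (tau2 p y d))" for d \<tau>
      unfolding W_def \<Phi>_def by (rule INF_affine[OF Pb g0])
    then have "(SUP \<tau>. W d \<tau>) = rho2 t r y d + g * vseq1 p r g L (Suc t) (tau2 p y d)" for d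
      unfolding vseq1_def by (simp add: SUP_affine[OF abs_INF_le[OF Pb] g0])
    then show ?thesis by simp
  qed
  finally show ?thesis .
qed

end


lemma SUP_attained: fixes F :: "'a \<Rightarrow> real" assumes "\<And>d'. F d' \<le> F d" shows "(SUP d'. F d') = F d"
proof (rule antisym)
  show "(SUP d'. F d') \<le> F d" using assms by (intro cSUP_least) auto
  have "bdd_above (range F)" using assms by (intro bdd_aboveI[of _ "F d"]) auto
  then show "F d \<le> (SUP d'. F d')" by (rule cSUP_upper[rotated]) auto
qed

lemma INF_attained: fixes F :: "'a \<Rightarrow> real" assumes "\<And>d'. F d \<le> F d'" shows "(INF d'. F d') = F d"
proof (rule antisym)
  show "F d \<le> (INF d'. F d')" using assms by (intro cINF_greatest) auto
  have "bdd_below (range F)" using assms by (intro bdd_belowI[of _ "F d"]) auto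
  then show "(INF d'. F d') \<le> F d" by (simp add: cINF_lower)
qed

context
  fixes p :: "'s::finite \<Rightarrow> 'a1::finite \<Rightarrow> 'a2::finite \<Rightarrow> ('s \<times> 'z1::finite \<times> 'z2::finite) pmf"
    and r :: "'s \<Rightarrow> 'a1 \<Rightarrow> 'a2 \<Rightarrow> real" and g :: real and L :: nat
  assumes g0: "0 \<le> g"
begin

lemma cont1: "continuous_on Dset (\<lambda>q. vseq2 p r g L t (tau1 x (emb q)))"
proof -
  obtain K where K: "\<And>y y'. \<bar>vseq2 p r g L t y - vseq2 p r g L t y'\<bar> \<le> K * M2 t (\<lambda>w. y w - y' w)"
    using vseq2_props[OF g0, where p=p and r=r and L=L and t=t] by blast
  show ?thesis
  proof (rule cont_lip[where K=K and W="UNIV \<times> hist t \<times> hist t \<times> UNIV" and V="vseq2 p r g L t" and Y="\<lambda>q. tau1 x (emb q)"])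
    show "\<bar>vseq2 p r g L t y - vseq2 p r g L t y'\<bar> \<le> K * (\<Sum>w\<in>UNIV \<times> hist t \<times> hist t \<times> UNIV. \<bar>y w - y' w\<bar>)" for y y'
      using K[of y y'] unfolding M2_def .
    show "finite (UNIV \<times> hist t \<times> hist t \<times> (UNIV :: 'a1 set) :: ('s \<times> ('a1 \<times> 'z1) list \<times> ('a2 \<times> 'z2) list \<times> 'a1) set)"
      by (simp add: finite_hist)
    fix w :: "'s \<times> ('a1 \<times> 'z1) list \<times> ('a2 \<times> 'z2) list \<times> 'a1"
    obtain s h1 h2 a1 where w: "w = (s, h1, h2, a1)" by (cases w)
    have eq: "\<And>q. q \<in> Dset \<Longrightarrow> tau1 x (emb q) w = x (s, h1, h2) * q h1 a1"
      by (simp add: w tau1_def pmf_emb)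
    show "continuous_on Dset (\<lambda>q. tau1 x (emb q) w)"
      by (subst continuous_on_cong[OF refl eq]) (auto intro!: continuous_intros cont_coord)
  qed
qed

lemma cont2: "continuous_on Dset (\<lambda>q. rho2 t r y (emb q) + g * vseq1 p r g L (Suc t) (tau2 p y (emb q)))"
proof (intro continuous_intros)
  have eq: "\<And>q. q \<in> Dset \<Longrightarrow> rho2 t r y (emb q) =
     (\<Sum>w\<in>UNIV \<times> hist t \<times> hist t \<times> UNIV. \<Sum>a2\<in>UNIV. y w * q (fst (snd (snd w))) a2 * r (fst w) (snd (snd (snd w))) a2)"
    by (simp add: rho2_def split_def pmf_emb)
  show "continuous_on Dset (\<lambda>q. rho2 t r y (emb q))"
    by (subst continuous_on_cong[OF refl eq]) (auto intro!: continuous_intros cont_coord)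
  obtain K where K: "\<And>y y'. \<bar>vseq1 p r g L (Suc t) y - vseq1 p r g L (Suc t) y'\<bar> \<le> K * M1 (Suc t) (\<lambda>w. y w - y' w)"
    using vseq1_props[OF g0, where p=p and r=r and L=L and t="Suc t"] by blast
  show "continuous_on Dset (\<lambda>q. vseq1 p r g L (Suc t) (tau2 p y (emb q)))"
  proof (rule cont_lip[where K=K and W="UNIV \<times> hist (Suc t) \<times> hist (Suc t)" and V="vseq1 p r g L (Suc t)" and Y="\<lambda>q. tau2 p y (emb q)"])
    show "\<bar>vseq1 p r g L (Suc t) y - vseq1 p r g L (Suc t) y'\<bar> \<le> K * (\<Sum>w\<in>UNIV \<times> hist (Suc t) \<times> hist (Suc t). \<bar>y w - y' w\<bar>)" for y y'
      using K[of y y'] unfolding M1_def .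
    show "finite (UNIV \<times> hist (Suc t) \<times> hist (Suc t) :: ('s \<times> ('a1 \<times> 'z1) list \<times> ('a2 \<times> 'z2) list) set)"
      by (simp add: finite_hist)
    fix w :: "'s \<times> ('a1 \<times> 'z1) list \<times> ('a2 \<times> 'z2) list"
    obtain s' h1 h2 where w: "w = (s', h1, h2)" by (cases w)
    show "continuous_on Dset (\<lambda>q. tau2 p y (emb q) w)"
    proof (cases "h1 \<noteq> [] \<and> h2 \<noteq> []")
      case False
      then have "(\<lambda>q. tau2 p y (emb q) w) = (\<lambda>q. 0)" by (auto simp: w tau2_def fun_eq_iff)
      then show ?thesis using continuous_on_const[of Dset "0::real"] by metis
    next
      case True
      obtain a1 z1 where l1: "last h1 = (a1, z1)" by (cases "last h1")
      obtain a2 z2 where l2: "last h2 = (a2, z2)" by (cases "last h2")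
      have eq: "\<And>q. q \<in> Dset \<Longrightarrow> tau2 p y (emb q) w =
          (\<Sum>s\<in>UNIV. y (s, butlast h1, butlast h2, a1) * q (butlast h2) a2 * pmf (p s a1 a2) (s', z1, z2))"
        using True by (simp add: w tau2_def l1 l2 pmf_emb)
      show ?thesis
        by (subst continuous_on_cong[OF refl eq]) (auto intro!: continuous_intros cont_coord)
    qed
  qed
qed

end

theorem theorem3p3:
  fixes p :: "'s::finite \<Rightarrow> 'a1::finite \<Rightarrow> 'a2::finite \<Rightarrow> ('s \<times> 'z1::finite \<times> 'z2::finite) pmf"
    and r :: "'s \<Rightarrow> 'a1 \<Rightarrow> 'a2 \<Rightarrow> real"
    and \<gamma> :: real and L t :: nat
  assumes "0 \<le> \<gamma>" and "\<gamma> < 1" and "t < L"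
  shows "(\<forall>x :: 's \<times> ('a1 \<times> 'z1) list \<times> ('a2 \<times> 'z2) list \<Rightarrow> real. occ1 t x \<longrightarrow>
            (\<exists>d. vseq1 p r \<gamma> L t x = rho1 x d + 1 * vseq2 p r \<gamma> L t (tau1 x d)
               \<and> (\<forall>d'. rho1 x d' + 1 * vseq2 p r \<gamma> L t (tau1 x d')
                        \<le> rho1 x d + 1 * vseq2 p r \<gamma> L t (tau1 x d))))
       \<and> (\<forall>y :: 's \<times> ('a1 \<times> 'z1) list \<times> ('a2 \<times> 'z2) list \<times> 'a1 \<Rightarrow> real. occ2 t y \<longrightarrow>
            (\<exists>d. vseq2 p r \<gamma> L t y = rho2 t r y d + \<gamma> * vseq1 p r \<gamma> L (Suc t) (tau2 p y d)
               \<and> (\<forall>d'. rho2 t r y d + \<gamma> * vseq1 p r \<gamma> L (Suc t) (tau2 p y d)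
                        \<le> rho2 t r y d' + \<gamma> * vseq1 p r \<gamma> L (Suc t) (tau2 p y d'))))"
proof (intro conjI allI impI)
  fix x :: "'s \<times> ('a1 \<times> 'z1) list \<times> ('a2 \<times> 'z2) list \<Rightarrow> real"
  obtain d where d: "\<And>d'. vseq2 p r \<gamma> L t (tau1 x d') \<le> vseq2 p r \<gamma> L t (tau1 x d)"
    using attain_max[OF cont1[OF assms(1), where p=p and r=r and L=L and t=t and x=x]] by blast
  have "vseq1 p r \<gamma> L t x = vseq2 p r \<gamma> L t (tau1 x d)"
    using claimA[OF assms(1) assms(3), where p=p and r=r and x=x] SUP_attained[of "\<lambda>d. vseq2 p r \<gamma> L t (tau1 x d)" d] d
    by simp
  then show "\<exists>d. vseq1 p r \<gamma> L t x = rho1 x d + 1 * vseq2 p r \<gamma> L t (tau1 x d)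
               \<and> (\<forall>d'. rho1 x d' + 1 * vseq2 p r \<gamma> L t (tau1 x d')
                        \<le> rho1 x d + 1 * vseq2 p r \<gamma> L t (tau1 x d))"
    using d by (intro exI[of _ d]) (simp add: rho1_def)
next
  fix y :: "'s \<times> ('a1 \<times> 'z1) list \<times> ('a2 \<times> 'z2) list \<times> 'a1 \<Rightarrow> real"
  obtain d where d: "\<And>d'. rho2 t r y d + \<gamma> * vseq1 p r \<gamma> L (Suc t) (tau2 p y d)
                        \<le> rho2 t r y d' + \<gamma> * vseq1 p r \<gamma> L (Suc t) (tau2 p y d')"
    using attain_min[OF cont2[OF assms(1), where p=p and r=r and L=L and t=t and y=y]] by blast
  have "vseq2 p r \<gamma> L t y = rho2 t r y d + \<gamma> * vseq1 p r \<gamma> L (Suc t) (tau2 p y d)"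
    using claimB[OF assms(1) assms(3), where p=p and r=r and y=y]
      INF_attained[of "\<lambda>d. rho2 t r y d + \<gamma> * vseq1 p r \<gamma> L (Suc t) (tau2 p y d)" d] d
    by simp
  then show "\<exists>d. vseq2 p r \<gamma> L t y = rho2 t r y d + \<gamma> * vseq1 p r \<gamma> L (Suc t) (tau2 p y d)
               \<and> (\<forall>d'. rho2 t r y d + \<gamma> * vseq1 p r \<gamma> L (Suc t) (tau2 p y d)
                        \<le> rho2 t r y d' + \<gamma> * vseq1 p r \<gamma> L (Suc t) (tau2 p y d'))"
    using d by blast
qed


end
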